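(* Let $\mathbf K$ be the complete linearly ordered set obtained from $\mathbb N=\{0,1,2,\dots\}$ (usual order) by adding a top element $\omega$, regarded as a complete lattice, and let $\mathbf L=\mathbf K\times\{0,1\}$ be the product lattice (componentwise order, with $\{0,1\}$ ordered by $0<1$). Then in the complete lattice $\mathbf L$: the element $(\omega,0)$ is a relative generator, but $(\omega,0)$ belongs to every maximal proper complete sublattice of $\mathbf L$. Moreover, the set $\Gamma$ of all non-generators of $\mathbf L$ is a complete sublattice of $\mathbf L$.
   Context: A complete lattice is a partially ordered set in which every subset (including the empty set) has a meet and a join. A complete sublattice of a complete lattice $\mathbf L$ is a subset $T\subseteq L$ closed under arbitrary meets and joins computed in $L$, including those of the empty set (so $T$ contains the minimum and the maximum of $L$). For $X\subseteq L$, $\langle X\rangle$ is the intersection of all complete sublattices containing $X$, and $\langle X,a\rangle=\langle X\cup\{a\}\rangle$. An element $a$ is a non-generator if for every $X\subseteq L$, $\langle X,a\rangle=L$ implies $\langle X\rangle=L$; otherwise $a$ is a relative generator. A maximal proper complete sublattice is a complete sublattice $T\ne L$ that is not properly contained in any complete sublattice other than $L$. *)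

theory Defs
  imports Main "HOL-Library.Extended_Nat" "HOL-Library.Product_Order"
begin

definition complete_sublattice :: "'a::complete_lattice set \<Rightarrow> bool" where
  "complete_sublattice T \<longleftrightarrow> (\<forall>S. S \<subseteq> T \<longrightarrow> Inf S \<in> T \<and> Sup S \<in> T)"

definition gen :: "'a::complete_lattice set \<Rightarrow> 'a set" where
  "gen X = \<Inter>{T. complete_sublattice T \<and> X \<subseteq> T}"

definition non_generator :: "'a::complete_lattice \<Rightarrow> bool" where
  "non_generator a \<longleftrightarrow> (\<forall>X. gen (insert a X) = UNIV \<longrightarrow> gen X = UNIV)"

definition relative_generator :: "'a::complete_lattice \<Rightarrow> bool" where
  "relative_generator a \<longleftrightarrow> \<not> non_generator a"

definition maximal_proper_complete_sublattice :: "'a::complete_lattice set \<Rightarrow> bool" where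
  "maximal_proper_complete_sublattice T \<longleftrightarrow>
     complete_sublattice T \<and> T \<noteq> UNIV \<and>
     (\<forall>T'. complete_sublattice T' \<and> T \<subseteq> T' \<longrightarrow> T' = T \<or> T' = UNIV)"

end

theory Submission
  imports Defs
begin

type_synonym LL = "enat \<times> bool"

lemma fstInf: "fst (Inf (S::LL set)) = Inf (fst ` S)" by (simp add: fst_Inf)
lemma fstSup: "fst (Sup (S::LL set)) = Sup (fst ` S)" by (simp add: fst_Sup)
lemma sndInf: "snd (Inf (S::LL set)) = (\<forall>p\<in>S. snd p)" by (auto simp add: snd_Inf)
lemma sndSup: "snd (Sup (S::LL set)) = (\<exists>p\<in>S. snd p)" by (auto simp add: snd_Sup)

lemma Inf_enat_mem: "A \<noteq> {} \<Longrightarrow> Inf (A::enat set) \<in> A"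
  unfolding Inf_enat_def by (auto intro: LeastI)

lemma Sup_enat_cases: "Sup (A::enat set) \<in> A \<union> {0, \<infinity>}"
  unfolding Sup_enat_def by (auto intro: Max_in)

lemma Inf_attained: "(S::LL set) \<noteq> {} \<Longrightarrow> \<exists>q\<in>S. fst (Inf S) = fst q"
proof -
  assume ne0: "S \<noteq> {}"
  have ne: "fst ` S \<noteq> {}" using ne0 by simp
  have "Inf (fst ` S) \<in> fst ` S" by (rule Inf_enat_mem[OF ne])
  then obtain q where q: "q \<in> S" "Inf (fst ` S) = fst q" by (rule imageE)
  hence "fst (Inf S) = fst q" by (simp add: fstInf)
  thus ?thesis using q(1) by blast
qed

lemma pair_eq: "(p::LL) = (fst p, snd p)" by simp

lemma cs_bot: "complete_sublattice T \<Longrightarrow> ((0::enat), False) \<in> T"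
  unfolding complete_sublattice_def
  by (metis Sup_empty bot_enat_def bot_bool_def empty_subsetI Pair_bot_bot)

lemma cs_top: "complete_sublattice T \<Longrightarrow> ((\<infinity>::enat), True) \<in> T"
  unfolding complete_sublattice_def
  by (metis Inf_empty top_enat_def top_bool_def empty_subsetI Pair_top_top)

lemma relgen_intro:
  assumes "complete_sublattice T" "a \<notin> T"
    "\<And>U. complete_sublattice U \<Longrightarrow> insert a T \<subseteq> U \<Longrightarrow> U = UNIV"
  shows "relative_generator a"
proof -
  have "gen (insert a T) = UNIV" unfolding gen_def using assms(3) by blast
  moreover have "gen T \<subseteq> T" unfolding gen_def using assms(1) by blast
  hence "gen T \<noteq> UNIV" using assms(2) by blast
  ultimately show ?thesis unfolding relative_generator_def non_generator_def by blast
qed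

lemma nongen_intro:
  assumes "\<And>U. complete_sublattice U \<Longrightarrow> a \<in> U"
  shows "non_generator a"
proof -
  have "gen (insert a X) = gen X" for X unfolding gen_def using assms by blast
  thus ?thesis unfolding non_generator_def by simp
qed


lemma gen_n:
  assumes n: "n > 0"
  shows "relative_generator ((enat n, b)::LL)"
proof (rule relgen_intro[where T="{p. fst p \<noteq> enat n}"])
  show "complete_sublattice {p::LL. fst p \<noteq> enat n}"
    unfolding complete_sublattice_def
  proof (intro allI impI conjI)
    fix S :: "LL set" assume S: "S \<subseteq> {p. fst p \<noteq> enat n}"
    show "Inf S \<in> {p. fst p \<noteq> enat n}"
    proof (cases "S = {}")
      case True thus ?thesis by (simp add: fstInf top_enat_def)
    next
      case False
      then obtain q where q: "q \<in> S" "fst (Inf S) = fst q" using Inf_attained by blast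
      thus ?thesis using S by auto
    qed
    show "Sup S \<in> {p. fst p \<noteq> enat n}"
      using Sup_enat_cases[of "fst ` S"] S n by (auto simp: fstSup enat_0_iff)
  qed
  show "(enat n, b) \<notin> {p::LL. fst p \<noteq> enat n}" by simp
  fix U :: "LL set"
  assume U: "complete_sublattice U" "insert (enat n, b) {p. fst p \<noteq> enat n} \<subseteq> U"
  have both: "(enat n, c) \<in> U" for c
  proof (cases "c = b")
    case True thus ?thesis using U by auto
  next
    case False
    show ?thesis
    proof (cases b)
      case True
      hence c: "c = False" using False by simp
      have "Inf {(enat n, True), (enat (Suc n), False)} = (enat n, False)"
        by (simp add: inf_enat_def)
      moreover have "{(enat n, True), (enat (Suc n), False)} \<subseteq> U" using U True by auto
      hence "Inf {(enat n, True), (enat (Suc n), False)} \<in> U"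
        using U(1) unfolding complete_sublattice_def by blast
      ultimately show ?thesis using c by simp
    next
      case bF: False
      hence c: "c = True" using False by simp
      have "Sup {(enat n, False), (enat (n - 1), True)} = (enat n, True)"
        using n by (simp add: sup_enat_def)
      moreover have "{(enat n, False), (enat (n - 1), True)} \<subseteq> U" using U bF n by auto
      hence "Sup {(enat n, False), (enat (n - 1), True)} \<in> U"
        using U(1) unfolding complete_sublattice_def by blast
      ultimately show ?thesis using c by simp
    qed
  qed
  show "U = UNIV"
  proof (rule set_eqI)
    fix p :: LL
    show "p \<in> U \<longleftrightarrow> p \<in> UNIV"
    proof (cases "fst p = enat n")
      case True
      hence "p = (enat n, snd p)" by (simp add: prod_eq_iff)
      thus ?thesis using both[of "snd p"] by simp
    next
      case False thus ?thesis using U by auto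
    qed
  qed
qed

lemma gen_01: "relative_generator ((0::enat), True)"
proof (rule relgen_intro[where T="- {((0::enat), True)}"])
  show "complete_sublattice (- {((0::enat), True)})"
    unfolding complete_sublattice_def
  proof (intro allI impI conjI)
    fix S :: "LL set" assume S: "S \<subseteq> - {(0, True)}"
    show "Inf S \<in> - {(0, True)}"
    proof (cases "S = {}")
      case True thus ?thesis by (simp add: top_prod_def top_enat_def)
    next
      case False
      then obtain q where q: "q \<in> S" "fst (Inf S) = fst q" using Inf_attained by blast
      show ?thesis
      proof
        assume "Inf S \<in> {(0, True)}"
        hence "fst (Inf S) = 0" "snd (Inf S)" by auto
        hence "fst q = 0" "snd q" using q by (auto simp: sndInf)
        hence "q = (0, True)" by (simp add: prod_eq_iff)
        thus False using q S by auto
      qed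
    qed
    show "Sup S \<in> - {(0, True)}"
    proof
      assume "Sup S \<in> {(0, True)}"
      hence a: "fst (Sup S) = 0" "snd (Sup S)" by auto
      then obtain q where q: "q \<in> S" "snd q" by (auto simp: sndSup)
      have "fst q \<le> fst (Sup S)" using q unfolding fstSup by (simp add: Sup_upper)
      hence "q = (0, True)" using a q by (auto intro: prod_eqI)
      thus False using q S by auto
    qed
  qed
  show "((0::enat), True) \<notin> - {((0::enat), True)}" by simp
  fix U :: "LL set"
  assume "insert (0, True) (- {(0, True)}) \<subseteq> U"
  thus "U = UNIV" by (metis ComplI UNIV_eq_I insert_subset singletonD subsetD)
qed

lemma gen_w0: "relative_generator ((\<infinity>::enat), False)"
proof (rule relgen_intro[where T="{p::LL. snd p \<or> p = (0, False)}"])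
  show "complete_sublattice {p::LL. snd p \<or> p = (0, False)}"
    unfolding complete_sublattice_def
  proof (intro allI impI conjI)
    fix S :: "LL set" assume S: "S \<subseteq> {p::LL. snd p \<or> p = (0, False)}"
    show "Inf S \<in> {p::LL. snd p \<or> p = (0, False)}"
    proof (cases "snd (Inf S)")
      case True thus ?thesis by simp
    next
      case False
      then obtain q where q: "q \<in> S" "\<not> snd q" by (auto simp: sndInf)
      hence "q = (0, False)" using S by auto
      hence "fst (Inf S) \<le> 0" using q unfolding fstInf by (metis Inf_lower fst_conv image_eqI)
      thus ?thesis using False by (auto intro: prod_eqI)
    qed
    show "Sup S \<in> {p::LL. snd p \<or> p = (0, False)}"
    proof (cases "snd (Sup S)")
      case True thus ?thesis by simp
    next
      case False
      hence "\<forall>q\<in>S. q = (0, False)" using S by (auto simp: sndSup)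
      hence "fst ` S \<subseteq> {0}" by auto
      hence "fst (Sup S) = 0" unfolding fstSup
        by (metis Sup_le_iff bot_enat_def le_zero_eq singletonD subsetD)
      thus ?thesis using False by (auto intro: prod_eqI)
    qed
  qed
  show "((\<infinity>::enat), False) \<notin> {p::LL. snd p \<or> p = (0, False)}" by simp
  fix U :: "LL set"
  assume U: "complete_sublattice U" "insert (\<infinity>, False) {p::LL. snd p \<or> p = (0, False)} \<subseteq> U"
  have "(x, False) \<in> U" for x
  proof -
    have "{(x, True), (\<infinity>, False)} \<subseteq> U" using U by auto
    hence "Inf {(x, True), (\<infinity>, False)} \<in> U"
      using U unfolding complete_sublattice_def by blast
    thus ?thesis by (simp add: inf_enat_def)
  qed
  moreover have "(x, True) \<in> U" for x using U by auto
  ultimately have "(x, c) \<in> U" for x c by (cases c) auto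
  thus "U = UNIV" by (metis UNIV_eq_I surj_pair)
qed


lemma max_contains:
  assumes M: "maximal_proper_complete_sublattice (T::LL set)"
  shows "((\<infinity>::enat), False) \<in> T"
proof (rule ccontr)
  assume nin: "(\<infinity>, False) \<notin> T"
  have cs: "complete_sublattice T" and ne: "T \<noteq> UNIV"
    and mx: "\<And>T'. complete_sublattice T' \<Longrightarrow> T \<subseteq> T' \<Longrightarrow> T' = T \<or> T' = UNIV"
    using M unfolding maximal_proper_complete_sublattice_def by auto
  have closed: "Inf S \<in> T" "Sup S \<in> T" if "S \<subseteq> T" for S
    using cs that unfolding complete_sublattice_def by auto
  define S0 where "S0 = {p\<in>T. \<not> snd p}"
  have "Sup S0 \<in> T" using closed[of S0] by (auto simp: S0_def)
  moreover have "\<not> snd (Sup S0)" by (auto simp: sndSup S0_def)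
  moreover have "Sup S0 = (Sup (fst ` S0), snd (Sup S0))" by (simp add: fstSup[symmetric])
  ultimately have "Sup (fst ` S0) \<noteq> \<infinity>"
  proof (intro notI)
    assume h: "Sup S0 \<in> T" "\<not> snd (Sup S0)" "Sup S0 = (Sup (fst ` S0), snd (Sup S0))"
      "Sup (fst ` S0) = \<infinity>"
    hence "Sup S0 = (\<infinity>, False)" by simp
    thus False using h(1) nin by simp
  qed
  then obtain N where N: "Sup (fst ` S0) = enat N" by auto
  have bnd: "fst p \<le> enat N" if "p \<in> T" "\<not> snd p" for p
  proof -
    have "fst p \<in> fst ` S0" using that by (auto simp: S0_def)
    hence "fst p \<le> Sup (fst ` S0)" by (rule Sup_upper)
    thus ?thesis using N by simp
  qed
  define P where "P = fst ` T"
  have Pinf: "Inf A \<in> P" if "A \<subseteq> P" for A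
  proof -
    define X where "X = {p\<in>T. fst p \<in> A}"
    have e: "fst ` X = A" using that by (auto simp: P_def image_iff X_def)
    have m: "Inf X \<in> T" using closed by (auto simp: X_def)
    have "fst (Inf X) = Inf A" using e by (simp add: fstInf)
    hence eq: "Inf A = fst (Inf X)" by simp
    show ?thesis unfolding P_def by (rule image_eqI[where f=fst, OF eq m])
  qed
  have Psup: "Sup A \<in> P" if "A \<subseteq> P" for A
  proof -
    define X where "X = {p\<in>T. fst p \<in> A}"
    have e: "fst ` X = A" using that by (auto simp: P_def image_iff X_def)
    have m: "Sup X \<in> T" using closed by (auto simp: X_def)
    have "fst (Sup X) = Sup A" using e by (simp add: fstSup)
    hence eq: "Sup A = fst (Sup X)" by simp
    show ?thesis unfolding P_def by (rule image_eqI[where f=fst, OF eq m])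
  qed
  define T' where "T' = {q. q \<in> T \<or> (\<not> snd q \<and> fst q \<in> P)}"
  have fstT': "fst ` S \<subseteq> P" if "S \<subseteq> T'" for S
    using that by (auto simp: T'_def P_def)
  have csT': "complete_sublattice T'"
    unfolding complete_sublattice_def
  proof (intro allI impI conjI)
    fix S assume S: "S \<subseteq> T'"
    show "Inf S \<in> T'"
    proof (cases "\<exists>q\<in>S. \<not> snd q")
      case True
      hence "\<not> snd (Inf S)" by (auto simp: sndInf)
      moreover have "fst (Inf S) \<in> P" using Pinf[OF fstT'[OF S]] by (simp add: fstInf)
      ultimately show ?thesis by (simp add: T'_def)
    next
      case False
      hence "S \<subseteq> T" using S by (auto simp: T'_def)
      thus ?thesis using closed by (auto simp: T'_def)
    qed
    show "Sup S \<in> T'"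
    proof (cases "\<exists>q\<in>S. snd q")
      case False
      hence "\<not> snd (Sup S)" by (auto simp: sndSup)
      moreover have "fst (Sup S) \<in> P" using Psup[OF fstT'[OF S]] by (simp add: fstSup)
      ultimately show ?thesis by (simp add: T'_def)
    next
      case True
      then obtain q0 where q0: "q0 \<in> S" "snd q0" by auto
      have q0T: "q0 \<in> T" using q0 S by (auto simp: T'_def)
      define S2 where "S2 = {p\<in>T. fst p \<in> fst ` S}"
      have "fst ` S2 = fst ` S"
      proof
        show "fst ` S2 \<subseteq> fst ` S" by (auto simp: S2_def)
        show "fst ` S \<subseteq> fst ` S2"
        proof
          fix x assume "x \<in> fst ` S"
          hence "x \<in> P" using fstT'[OF S] by auto
          then obtain p where "p \<in> T" "fst p = x" by (auto simp: P_def)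
          thus "x \<in> fst ` S2" using \<open>x \<in> fst ` S\<close> by (auto simp: S2_def)
        qed
      qed
      moreover have "q0 \<in> S2" using q0 q0T by (auto simp: S2_def)
      hence "snd (Sup S2)" using q0 unfolding sndSup by blast
      moreover have "snd (Sup S)" using q0 by (auto simp: sndSup)
      ultimately have "Sup S = Sup S2" by (intro prod_eqI) (simp_all add: fstSup)
      moreover have "Sup S2 \<in> T" using closed by (auto simp: S2_def)
      ultimately show ?thesis by (simp add: T'_def)
    qed
  qed
  have "T \<subseteq> T'" by (auto simp: T'_def)
  moreover have "(\<infinity>, False) \<in> T'"
    using cs_top[OF cs] by (force simp: T'_def P_def)
  ultimately have "T' = UNIV" using mx csT' nin by blast
  hence allT: "(x, True) \<in> T" for x
  proof -
    have "(x, True) \<in> T'" using \<open>T' = UNIV\<close> by simp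
    thus ?thesis by (simp add: T'_def)
  qed
  define M where "M = {q::LL. snd q \<or> fst q \<le> enat (Suc N)}"
  have csM: "complete_sublattice M"
    unfolding complete_sublattice_def
  proof (intro allI impI conjI)
    fix S assume S: "S \<subseteq> M"
    show "Inf S \<in> M"
    proof (cases "\<exists>q\<in>S. \<not> snd q")
      case True
      then obtain q where q: "q \<in> S" "\<not> snd q" by auto
      hence "fst q \<le> enat (Suc N)" using S by (auto simp: M_def)
      moreover have "fst (Inf S) \<le> fst q" using q unfolding fstInf by (simp add: Inf_lower)
      ultimately show ?thesis by (auto simp: M_def)
    next
      case False thus ?thesis by (auto simp: M_def sndInf)
    qed
    show "Sup S \<in> M"
    proof (cases "\<exists>q\<in>S. snd q")
      case True thus ?thesis by (auto simp: M_def sndSup)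
    next
      case False
      hence "\<forall>q\<in>S. fst q \<le> enat (Suc N)" using S by (auto simp: M_def)
      hence "fst (Sup S) \<le> enat (Suc N)" unfolding fstSup by (auto intro: Sup_least)
      thus ?thesis by (auto simp: M_def)
    qed
  qed
  have "T \<subseteq> M"
  proof
    fix q assume "q \<in> T"
    thus "q \<in> M" using bnd[of q] order_trans[of "fst q" "enat N" "enat (Suc N)"] by (cases "snd q") (auto simp: M_def)
  qed
  moreover have "(enat (Suc N), False) \<in> M" by (simp add: M_def)
  moreover have "(enat (Suc N), False) \<notin> T" using bnd[of "(enat (Suc N), False)"] by auto
  moreover have "(\<infinity>, False) \<notin> M" by (simp add: M_def)
  ultimately show False using mx[OF csM] by blast
qed

lemma nongen_set: "{a::LL. non_generator a} = {(0, False), (\<infinity>, True)}"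
proof (rule set_eqI, rule iffI)
  fix a :: LL assume "a \<in> {a. non_generator a}"
  hence ng: "non_generator a" by simp
  obtain x b where a: "a = (x, b)" by (cases a)
  show "a \<in> {(0, False), (\<infinity>, True)}"
  proof (cases x)
    case (enat n)
    show ?thesis
    proof (cases "n = 0")
      case True
      show ?thesis
      proof (cases b)
        case True
        hence "a = (0, True)" using a enat \<open>n = 0\<close> by (simp add: enat_0)
        thus ?thesis using ng gen_01 by (simp add: relative_generator_def)
      next
        case False
        hence "a = (0, False)" using a enat \<open>n = 0\<close> by (simp add: enat_0)
        thus ?thesis by simp
      qed
    next
      case False thus ?thesis using ng gen_n[of n b] a enat by (simp add: relative_generator_def)
    qed
  next
    case infinity
    thus ?thesis using ng gen_w0 a by (cases b) (auto simp: relative_generator_def)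
  qed
next
  fix a :: LL assume "a \<in> {(0, False), (\<infinity>, True)}"
  thus "a \<in> {a. non_generator a}"
    using nongen_intro cs_bot cs_top by auto
qed

theorem proposition2:
  shows "relative_generator ((\<infinity>::enat), False)
    \<and> (\<forall>T :: (enat \<times> bool) set. maximal_proper_complete_sublattice T \<longrightarrow> ((\<infinity>::enat), False) \<in> T)
    \<and> complete_sublattice {a :: enat \<times> bool. non_generator a}"
proof (intro conjI allI impI)
  show "relative_generator ((\<infinity>::enat), False)" by (rule gen_w0)
  show "\<And>T. maximal_proper_complete_sublattice (T::LL set) \<Longrightarrow> (\<infinity>, False) \<in> T"
    by (rule max_contains)
  show "complete_sublattice {a :: enat \<times> bool. non_generator a}"
    unfolding nongen_set complete_sublattice_def
  proof (intro allI impI conjI)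
    fix S :: "LL set" assume S: "S \<subseteq> {(0, False), (\<infinity>, True)}"
    show "Inf S \<in> {(0, False), (\<infinity>, True)}"
    proof (cases "(0, False) \<in> S")
      case True
      hence "Inf S \<le> (0, False)" by (rule Inf_lower)
      moreover have b: "((0::enat), False) = bot" by (simp add: bot_prod_def bot_enat_def)
      ultimately have "Inf S = (0, False)" by (metis le_bot)
      thus ?thesis by simp
    next
      case False
      hence "S \<subseteq> {top}" using S by (auto simp: top_prod_def top_enat_def)
      hence "Inf S = top" using Inf_top_conv(1) by blast
      thus ?thesis by (simp add: top_prod_def top_enat_def)
    qed
    show "Sup S \<in> {(0, False), (\<infinity>, True)}"
    proof (cases "(\<infinity>, True) \<in> S")
      case True
      hence "(\<infinity>, True) \<le> Sup S" by (rule Sup_upper)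
      moreover have b: "((\<infinity>::enat), True) = top" by (simp add: top_prod_def top_enat_def)
      ultimately have "Sup S = top" by (metis top_unique)
      thus ?thesis by (simp add: top_prod_def top_enat_def)
    next
      case False
      hence "S \<subseteq> {bot}" using S by (auto simp: bot_prod_def bot_enat_def)
      hence "Sup S = bot" using Sup_bot_conv(1) by blast
      thus ?thesis by (simp add: bot_prod_def bot_enat_def)
    qed
  qed
qed

end
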